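(* Let $n,N\ge1$ be integers, $0<p<1$, $0<\epsilon_1<1$, and $\beta>0$ with $L=\beta n$ a positive integer. Define $$\beta_0=\frac{\log_2\left(\dfrac{\epsilon_1}{2^{n}N^2\left((1+2p-p^2)^n-1\right)}\right)}{n\log_2\left(1-\frac{1}{2}(1-p)^2\right)}.$$ If $\beta\ge\beta_0$, then in the random model described in the context, $P\big(|\mathsf{Y_{faulty}}|>1\big)<\epsilon_1$.
   Context: Model: Let $M=2^n$ and $C=\{0,1\}^n=\{\mathbf{x}_1,\dots,\mathbf{x}_M\}$ (addresses). Data parts $\mathbf{d}_1,\dots,\mathbf{d}_M$ are independent and uniform on $\{0,1\}^L$; strand $i$ is $(\mathbf{x}_i,\mathbf{d}_i)$. Each strand is transmitted $N$ times through $\mathsf{BEC}(p)$ (each symbol independently replaced by $*$ with probability $p$, independently across transmissions and strands); $\mathcal{S}_N((\mathbf{x}_i,\mathbf{d}_i))$ is the multiset of the $N$ reads of strand $i$, and $\mathcal{Y}$ the multiset of all $MN$ reads. Two words $\mathbf{u},\mathbf{v}\in\{0,1,*\}^\ell$ agree, $\mathbf{u}\cong\mathbf{v}$, if $u_k=v_k$ wherever neither is erased; reads agree if both address parts and data parts agree. A read $(\mathbf{y},\mathbf{d}')\in\mathcal{S}_N((\mathbf{x},\mathbf{d}))$ is faulty if it agrees with some read of a strand $(\tilde{\mathbf{x}},\tilde{\mathbf{d}})$ with $\tilde{\mathbf{x}}\ne\mathbf{x}$; $\mathsf{Y_{faulty}}$ is the multiset of faulty reads. *)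

theory Defs
  imports "HOL-Probability.Probability"
begin

text \<open>Symbols of {0,1,*}: Some b is a bit, None is the erasure symbol *.\<close>
type_synonym sym = "bool option"
type_synonym word = "sym list"
type_synonym read = "word \<times> word"  \<comment> \<open>(address part, data part)\<close>

fun bec_word :: "real \<Rightarrow> bool list \<Rightarrow> word pmf" where
  "bec_word p [] = return_pmf []"
| "bec_word p (b # w) =
     bind_pmf (bernoulli_pmf p) (\<lambda>e. bind_pmf (bec_word p w) (\<lambda>r.
       return_pmf ((if e then None else Some b) # r)))"

definition bec_strand :: "real \<Rightarrow> bool list \<Rightarrow> bool list \<Rightarrow> read pmf" where
  "bec_strand p x d = pair_pmf (bec_word p x) (bec_word p d)"

definition agree_word :: "word \<Rightarrow> word \<Rightarrow> bool" where
  "agree_word u v \<longleftrightarrow> length u = length v \<and>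
     (\<forall>k < length u. u ! k \<noteq> None \<and> v ! k \<noteq> None \<longrightarrow> u ! k = v ! k)"

definition agree_read :: "read \<Rightarrow> read \<Rightarrow> bool" where
  "agree_read r s \<longleftrightarrow> agree_word (fst r) (fst s) \<and> agree_word (snd r) (snd s)"

text \<open>Address set C = {0,1}^n; strands are indexed by their (distinct) addresses.\<close>
definition addresses :: "nat \<Rightarrow> bool list set" where
  "addresses n = {x. length x = n}"

text \<open>Outcome R: R x t is the t-th read (t < N) of the strand with address x.\<close>
definition reads_pmf :: "nat \<Rightarrow> nat \<Rightarrow> nat \<Rightarrow> real \<Rightarrow> (bool list \<Rightarrow> nat \<Rightarrow> read) pmf" where
  "reads_pmf n L N p =
     Pi_pmf (addresses n) undefined (\<lambda>x.
       bind_pmf (pmf_of_set {d :: bool list. length d = L}) (\<lambda>d.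
         Pi_pmf {..<N} undefined (\<lambda>t. bec_strand p x d)))"

text \<open>Indices of faulty reads: the read (x,t) agrees with some read of a strand with a
  different address. |Y_faulty| is the number of such reads (multiset size).\<close>
definition faulty_reads :: "nat \<Rightarrow> nat \<Rightarrow> (bool list \<Rightarrow> nat \<Rightarrow> read) \<Rightarrow> (bool list \<times> nat) set" where
  "faulty_reads n N R = {(x, t). x \<in> addresses n \<and> t < N \<and>
      (\<exists>x' \<in> addresses n. x' \<noteq> x \<and> (\<exists>t' < N. agree_read (R x t) (R x' t')))}"

definition num_faulty :: "nat \<Rightarrow> nat \<Rightarrow> (bool list \<Rightarrow> nat \<Rightarrow> read) \<Rightarrow> nat" where
  "num_faulty n N R = card (faulty_reads n N R)"

definition beta0 :: "nat \<Rightarrow> nat \<Rightarrow> real \<Rightarrow> real \<Rightarrow> real" where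
  "beta0 n N p \<epsilon>1 =
     log 2 (\<epsilon>1 / (2 ^ n * real N ^ 2 * ((1 + 2 * p - p\<^sup>2) ^ n - 1)))
     / (real n * log 2 (1 - (1 - p)\<^sup>2 / 2))"

end

theory Submission
  imports Defs "HOL-Library.List_Lexorder"
begin

lemma prob_bind_pmf: "measure_pmf.prob (bind_pmf M f) A = (\<integral>x. measure_pmf.prob (f x) A \<partial>M)"
  unfolding measure_pmf_bind
  using measurable_measure_pmf[of f]
  by (subst measure_pmf.measure_bind[where N="count_space UNIV"]) auto

lemma bec_cons: "bec_word p (b#w) = map_pmf (\<lambda>(s,r). s # r)
   (pair_pmf (map_pmf (\<lambda>e. if e then None else Some b) (bernoulli_pmf p)) (bec_word p w))"
  by (simp add: map_pmf_def pair_pmf_def bind_assoc_pmf bind_return_pmf)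

lemma agree_cons: "agree_word (u#us) (v#vs) \<longleftrightarrow> (u \<noteq> None \<and> v \<noteq> None \<longrightarrow> u = v) \<and> agree_word us vs"
  unfolding agree_word_def by (auto simp: All_less_Suc2)

lemma pair_cons: "pair_pmf (map_pmf (\<lambda>(s,r). s#r) (pair_pmf S1 U)) (map_pmf (\<lambda>(s,r). s#r) (pair_pmf S2 V))
  = map_pmf (\<lambda>((s1,s2),(r1,r2)). (s1#r1, s2#r2)) (pair_pmf (pair_pmf S1 S2) (pair_pmf U V))"
  apply (simp add: map_pmf_def pair_pmf_def bind_assoc_pmf bind_return_pmf)
  apply (rule bind_pmf_cong[OF refl])
  apply (rule bind_commute_pmf)
  done

fun wt :: "real \<Rightarrow> bool list \<Rightarrow> bool list \<Rightarrow> real" where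
  "wt c [] [] = 1"
| "wt c (a#u) (b#v) = (if a = b then 1 else c) * wt c u v"
| "wt c _ _ = 0"

lemma sym_prob:
  assumes "0 \<le> p" "p \<le> 1"
  shows "measure_pmf.prob (pair_pmf (map_pmf (\<lambda>e. if e then None else Some a) (bernoulli_pmf p))
            (map_pmf (\<lambda>e. if e then None else Some b) (bernoulli_pmf p)))
           {(s1,s2). s1 \<noteq> None \<and> s2 \<noteq> None \<longrightarrow> s1 = s2}
         = (if a = b then 1 else 1 - (1-p)^2)"
proof -
  let ?M = "pair_pmf (bernoulli_pmf p) (bernoulli_pmf p)"
  have "pair_pmf (map_pmf (\<lambda>e. if e then None else Some a) (bernoulli_pmf p))
            (map_pmf (\<lambda>e. if e then None else Some b) (bernoulli_pmf p)) =
        map_pmf (\<lambda>(e1,e2). (if e1 then None else Some a, if e2 then None else Some b)) ?M"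
    by (simp add: map_pair)
  moreover have vim: "(\<lambda>(e1,e2). (if e1 then None else Some a, if e2 then None else Some b)) -`
      {(s1,s2). s1 \<noteq> None \<and> s2 \<noteq> None \<longrightarrow> s1 = s2} = (if a = b then UNIV else UNIV - {(False,False)})"
    by (auto split: if_splits)
  ultimately have eq: "measure_pmf.prob (pair_pmf (map_pmf (\<lambda>e. if e then None else Some a) (bernoulli_pmf p))
            (map_pmf (\<lambda>e. if e then None else Some b) (bernoulli_pmf p)))
           {(s1,s2). s1 \<noteq> None \<and> s2 \<noteq> None \<longrightarrow> s1 = s2}
       = measure_pmf.prob ?M (if a = b then UNIV else UNIV - {(False,False)})"
    by (simp only: measure_map_pmf)
  show ?thesis
  proof (cases "a = b")
    case True then show ?thesis unfolding eq by simp
  next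
    case False
    have "measure_pmf.prob ?M (UNIV - {(False,False)}) = 1 - measure_pmf.prob ?M {(False,False)}"
      using measure_pmf.prob_compl[of "{(False,False)}" ?M] by simp
    also have "\<dots> = 1 - (1-p)^2"
      using assms by (simp add: measure_pmf_single pmf_pair power2_eq_square)
    finally show ?thesis unfolding eq using False by simp
  qed
qed

lemma W_lemma:
  assumes "0 \<le> p" "p \<le> 1" "length u = length v"
  shows "measure_pmf.prob (pair_pmf (bec_word p u) (bec_word p v)) {(a,b). agree_word a b}
     = wt (1-(1-p)^2) u v"
  using assms(3)
proof (induction u v rule: list_induct2)
  case Nil
  then show ?case by (simp add: agree_word_def)
next
  case (Cons a u b v)
  let ?S1 = "map_pmf (\<lambda>e. if e then None else Some a) (bernoulli_pmf p)"
  let ?S2 = "map_pmf (\<lambda>e. if e then None else Some b) (bernoulli_pmf p)"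
  have "measure_pmf.prob (pair_pmf (bec_word p (a#u)) (bec_word p (b#v))) {(x,y). agree_word x y}
     = measure_pmf.prob (pair_pmf (pair_pmf ?S1 ?S2) (pair_pmf (bec_word p u) (bec_word p v)))
         ({(s1,s2). s1 \<noteq> None \<and> s2 \<noteq> None \<longrightarrow> s1 = s2} \<times> {(x,y). agree_word x y})"
    unfolding bec_cons pair_cons
    by (auto simp: agree_cons intro!: arg_cong[where f="measure_pmf.prob _"])
  also have "\<dots> = measure_pmf.prob (pair_pmf ?S1 ?S2) {(s1,s2). s1 \<noteq> None \<and> s2 \<noteq> None \<longrightarrow> s1 = s2}
      * measure_pmf.prob (pair_pmf (bec_word p u) (bec_word p v)) {(x,y). agree_word x y}"
    by (rule measure_pmf_prob_product) (auto intro: countableI_type)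
  also have "\<dots> = wt (1-(1-p)^2) (a#u) (b#v)"
    using sym_prob[OF assms(1,2), of a b] Cons.IH by simp
  finally show ?case .
qed

lemma wt_sym: "wt c u v = wt c v u"
  by (induction c u v rule: wt.induct) auto

lemma lists_Suc: "{x :: bool list. length x = Suc m} = (\<lambda>(c,y). c # y) ` (UNIV \<times> {y. length y = m})"
  by (auto simp: length_Suc_conv)

lemma wt_sum: "length u = m \<Longrightarrow> (\<Sum>v\<in>{v. length v = m}. wt c u v) = (1 + c) ^ m"
proof (induction u arbitrary: m)
  case Nil then show ?case by simp
next
  case (Cons a u)
  then obtain k where m: "m = Suc k" and k: "length u = k" by auto
  have inj: "inj_on (\<lambda>(c::bool,y). c # y) (UNIV \<times> {y. length y = k})" by (auto simp: inj_on_def)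
  have fin: "finite {y :: bool list. length y = k}"
    using finite_lists_length_eq[of "UNIV :: bool set" k] by simp
  have "(\<Sum>v\<in>{v. length v = m}. wt c (a#u) v) = (\<Sum>(b,y)\<in>UNIV \<times> {y. length y = k}. wt c (a#u) (b#y))"
    unfolding m lists_Suc by (subst sum.reindex[OF inj]) (simp add: case_prod_unfold)
  also have "\<dots> = (\<Sum>b\<in>UNIV. \<Sum>y\<in>{y. length y = k}. (if a = b then 1 else c) * wt c u y)"
    by (subst sum.cartesian_product[symmetric]) simp
  also have "\<dots> = (\<Sum>b\<in>UNIV. (if a = b then 1 else c) * (1 + c) ^ k)"
    by (simp add: sum_distrib_left[symmetric] Cons.IH[OF k])
  also have "\<dots> = (1 + c) ^ m"
    unfolding m by (cases a) (simp_all add: UNIV_bool algebra_simps)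
  finally show ?case .
qed

lemma wt_self: "wt c u u = 1"
  by (induction u) auto

lemma card_lists: "card {v :: bool list. length v = m} = 2 ^ m"
  using card_lists_length_eq[of "UNIV :: bool set" m] by simp

lemma finite_lists: "finite {v :: bool list. length v = m}"
  using finite_lists_length_eq[of "UNIV :: bool set" m] by simp

lemma pair_bind_bind: "pair_pmf (bind_pmf A f) (bind_pmf B g) = bind_pmf A (\<lambda>d. bind_pmf B (\<lambda>d'. pair_pmf (f d) (g d')))"
  apply (simp add: pair_pmf_def bind_assoc_pmf)
  apply (rule bind_pmf_cong[OF refl])
  apply (subst bind_commute_pmf)
  apply (simp add: bind_assoc_pmf)
  done

lemma pair_strand: "pair_pmf (bec_strand p x d) (bec_strand p x' d') =
   map_pmf (\<lambda>((a,a'),(b,b')). ((a,b),(a',b'))) (pair_pmf (pair_pmf (bec_word p x) (bec_word p x')) (pair_pmf (bec_word p d) (bec_word p d')))"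
  unfolding bec_strand_def
  apply (simp add: map_pmf_def pair_pmf_def bind_assoc_pmf bind_return_pmf)
  apply (rule bind_pmf_cong[OF refl])
  apply (rule bind_commute_pmf)
  done

lemma strand_pair_prob:
  assumes "0 \<le> p" "p \<le> 1" "length x = length x'" "length d = length d'"
  shows "measure_pmf.prob (pair_pmf (bec_strand p x d) (bec_strand p x' d')) {(r,s). agree_read r s}
    = wt (1-(1-p)^2) x x' * wt (1-(1-p)^2) d d'"
proof -
  have "measure_pmf.prob (pair_pmf (bec_strand p x d) (bec_strand p x' d')) {(r,s). agree_read r s}
     = measure_pmf.prob (pair_pmf (pair_pmf (bec_word p x) (bec_word p x')) (pair_pmf (bec_word p d) (bec_word p d')))
        ({(a,b). agree_word a b} \<times> {(a,b). agree_word a b})"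
    unfolding pair_strand measure_map_pmf
    by (rule arg_cong[where f="measure_pmf.prob _"]) (auto simp: agree_read_def)
  also have "\<dots> = wt (1-(1-p)^2) x x' * wt (1-(1-p)^2) d d'"
    by (subst measure_pmf_prob_product) (auto intro: countableI_type simp: W_lemma assms)
  finally show ?thesis .
qed

lemma read_pair_prob:
  assumes "0 \<le> p" "p \<le> 1" "length x = length x'"
  shows "measure_pmf.prob (pair_pmf
      (bind_pmf (pmf_of_set {d :: bool list. length d = L}) (\<lambda>d. bec_strand p x d))
      (bind_pmf (pmf_of_set {d :: bool list. length d = L}) (\<lambda>d. bec_strand p x' d)))
     {(r,s). agree_read r s} = wt (1-(1-p)^2) x x' * ((1 + (1-(1-p)^2)) / 2) ^ L"
proof -
  let ?c = "1-(1-p)^2"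
  let ?S = "{d :: bool list. length d = L}"
  have ne: "?S \<noteq> {}" using length_replicate[of L True] by blast
  have "measure_pmf.prob (pair_pmf
      (bind_pmf (pmf_of_set ?S) (\<lambda>d. bec_strand p x d))
      (bind_pmf (pmf_of_set ?S) (\<lambda>d. bec_strand p x' d)))
     {(r,s). agree_read r s} = (\<integral>d. (\<integral>d'. measure_pmf.prob (pair_pmf (bec_strand p x d) (bec_strand p x' d')) {(r,s). agree_read r s} \<partial>pmf_of_set ?S) \<partial>pmf_of_set ?S)"
    unfolding pair_bind_bind prob_bind_pmf ..
  also have "\<dots> = (\<Sum>d\<in>?S. (\<Sum>d'\<in>?S. measure_pmf.prob (pair_pmf (bec_strand p x d) (bec_strand p x' d')) {(r,s). agree_read r s}) / card ?S) / card ?S"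
    by (simp only: integral_pmf_of_set[OF ne finite_lists])
  also have "\<dots> = (\<Sum>d\<in>?S. (\<Sum>d'\<in>?S. wt ?c x x' * wt ?c d d') / 2^L) / 2^L"
  proof -
    have *: "\<And>d. d \<in> ?S \<Longrightarrow> (\<Sum>d'\<in>?S. measure_pmf.prob (pair_pmf (bec_strand p x d) (bec_strand p x' d')) {(r,s). agree_read r s})
       = (\<Sum>d'\<in>?S. wt ?c x x' * wt ?c d d')"
      by (rule sum.cong) (auto simp: strand_pair_prob assms)
    have "(\<Sum>d\<in>?S. (\<Sum>d'\<in>?S. measure_pmf.prob (pair_pmf (bec_strand p x d) (bec_strand p x' d')) {(r,s). agree_read r s}) / 2^L)
       = (\<Sum>d\<in>?S. (\<Sum>d'\<in>?S. wt ?c x x' * wt ?c d d') / 2^L)"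
      by (rule sum.cong[OF refl]) (simp only: *)
    then show ?thesis unfolding card_lists by simp
  qed
  also have "\<dots> = (\<Sum>d\<in>?S. wt ?c x x' * (1 + ?c)^L / 2^L) / 2^L"
    by (intro arg_cong[where f="\<lambda>t. t / 2^L"] sum.cong refl)
       (simp add: sum_distrib_left[symmetric] wt_sum)
  also have "\<dots> = wt ?c x x' * ((1 + ?c) / 2) ^ L"
    by (simp add: card_lists power_divide)
  finally show ?thesis .
qed

lemma Pi_two:
  assumes "finite A" "x \<in> A" "x' \<in> A" "x \<noteq> x'"
  shows "map_pmf (\<lambda>f. (f x, f x')) (Pi_pmf A dflt P) = pair_pmf (P x) (P x')"
proof -
  have "map_pmf (\<lambda>f. (f x, f x')) (Pi_pmf A dflt P) = map_pmf (\<lambda>f. (f x, f x')) (Pi_pmf {x, x'} dflt P)"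
    using assms by (subst Pi_pmf_subset[of A "{x,x'}"]) (auto simp: map_pmf_comp o_def)
  also have "\<dots> = pair_pmf (P x) (P x')"
    using assms
    by (simp add: Pi_pmf_insert Pi_pmf_singleton pair_map_pmf2 map_pmf_comp o_def case_prod_unfold)
  finally show ?thesis .
qed

lemma reads_marg:
  assumes "x \<in> addresses n" "x' \<in> addresses n" "x \<noteq> x'" "t < N" "t' < N"
  shows "map_pmf (\<lambda>R. (R x t, R x' t')) (reads_pmf n L N p) =
    pair_pmf (bind_pmf (pmf_of_set {d :: bool list. length d = L}) (\<lambda>d. bec_strand p x d))
      (bind_pmf (pmf_of_set {d :: bool list. length d = L}) (\<lambda>d. bec_strand p x' d))"
proof -
  have fin: "finite (addresses n)" unfolding addresses_def by (rule finite_lists)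
  have "map_pmf (\<lambda>R. (R x t, R x' t')) (reads_pmf n L N p) =
     map_pmf (\<lambda>(f,g). (f t, g t')) (map_pmf (\<lambda>R. (R x, R x')) (reads_pmf n L N p))"
    by (simp add: map_pmf_comp o_def)
  also have "\<dots> = map_pmf (\<lambda>(f,g). (f t, g t'))
     (pair_pmf (bind_pmf (pmf_of_set {d :: bool list. length d = L}) (\<lambda>d. Pi_pmf {..<N} undefined (\<lambda>t. bec_strand p x d)))
               (bind_pmf (pmf_of_set {d :: bool list. length d = L}) (\<lambda>d. Pi_pmf {..<N} undefined (\<lambda>t. bec_strand p x' d))))"
    unfolding reads_pmf_def using assms fin by (subst Pi_two) auto
  also have "\<dots> = pair_pmf (map_pmf (\<lambda>f. f t) (bind_pmf (pmf_of_set {d :: bool list. length d = L}) (\<lambda>d. Pi_pmf {..<N} undefined (\<lambda>t. bec_strand p x d))))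
      (map_pmf (\<lambda>f. f t') (bind_pmf (pmf_of_set {d :: bool list. length d = L}) (\<lambda>d. Pi_pmf {..<N} undefined (\<lambda>t. bec_strand p x' d))))"
    by (rule map_pair)
  also have "\<dots> = pair_pmf (bind_pmf (pmf_of_set {d :: bool list. length d = L}) (\<lambda>d. bec_strand p x d))
      (bind_pmf (pmf_of_set {d :: bool list. length d = L}) (\<lambda>d. bec_strand p x' d))"
    using assms by (simp add: map_bind_pmf Pi_pmf_component)
  finally show ?thesis .
qed
lemma event_prob:
  assumes "0 \<le> p" "p \<le> 1" "x \<in> addresses n" "x' \<in> addresses n" "x \<noteq> x'" "t < N" "t' < N"
  shows "measure_pmf.prob (reads_pmf n L N p) {R. agree_read (R x t) (R x' t')}
    = wt (1-(1-p)^2) x x' * ((1 + (1-(1-p)^2)) / 2) ^ L"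
proof -
  have "{R. agree_read (R x t) (R x' t')} = (\<lambda>R. (R x t, R x' t')) -` {(r,s). agree_read r s}" by auto
  then have "measure_pmf.prob (reads_pmf n L N p) {R. agree_read (R x t) (R x' t')}
     = measure_pmf.prob (map_pmf (\<lambda>R. (R x t, R x' t')) (reads_pmf n L N p)) {(r,s). agree_read r s}"
    by simp
  also have "\<dots> = wt (1-(1-p)^2) x x' * ((1 + (1-(1-p)^2)) / 2) ^ L"
    unfolding reads_marg[OF assms(3-7)]
    using assms(3,4) by (intro read_pair_prob assms(1,2)) (simp add: addresses_def)
  finally show ?thesis .
qed

lemma agree_read_sym: "agree_read r s = agree_read s r"
  unfolding agree_read_def agree_word_def by auto

lemma sum_lt_pairs:
  fixes c :: real and n :: nat
  defines "A \<equiv> addresses n"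
  shows "(\<Sum>(x,x')\<in>{(x,x'). x \<in> A \<and> x' \<in> A \<and> x < x'}. wt c x x') = 2^n * ((1 + c)^n - 1) / 2"
proof -
  let ?Pl = "{(x,x'). x \<in> A \<and> x' \<in> A \<and> x < x'}"
  let ?Pg = "{(x,x'). x \<in> A \<and> x' \<in> A \<and> x' < x}"
  have finA: "finite A" unfolding A_def addresses_def by (rule finite_lists)
  have fPl: "finite ?Pl" by (rule finite_subset[of _ "A \<times> A"]) (auto simp: finA)
  have fPg: "finite ?Pg" by (rule finite_subset[of _ "A \<times> A"]) (auto simp: finA)
  have ne: "Sigma A (\<lambda>x. A - {x}) = ?Pl \<union> ?Pg" by (auto simp: neq_iff)
  have "(\<Sum>(x,x')\<in>Sigma A (\<lambda>x. A - {x}). wt c x x') = (\<Sum>x\<in>A. \<Sum>x'\<in>A - {x}. wt c x x')"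
    by (rule sum.Sigma[symmetric]) (auto simp: finA)
  also have "\<dots> = (\<Sum>x\<in>A. (1 + c)^n - 1)"
  proof (rule sum.cong[OF refl])
    fix x assume "x \<in> A"
    then have "(\<Sum>x'\<in>A - {x}. wt c x x') = (\<Sum>x'\<in>A. wt c x x') - wt c x x"
      using finA by (simp add: sum_diff1)
    also have "\<dots> = (1 + c)^n - 1" using \<open>x \<in> A\<close> unfolding A_def addresses_def
      by (simp add: wt_sum wt_self)
    finally show "(\<Sum>x'\<in>A - {x}. wt c x x') = (1 + c)^n - 1" .
  qed
  also have "\<dots> = 2^n * ((1 + c)^n - 1)"
    unfolding A_def addresses_def by (simp add: card_lists)
  finally have tot: "(\<Sum>(x,x')\<in>?Pl \<union> ?Pg. wt c x x') = 2^n * ((1 + c)^n - 1)" unfolding ne .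
  have "(\<Sum>(x,x')\<in>?Pl \<union> ?Pg. wt c x x') = (\<Sum>(x,x')\<in>?Pl. wt c x x') + (\<Sum>(x,x')\<in>?Pg. wt c x x')"
    by (rule sum.union_disjoint) (auto simp: fPl fPg)
  moreover have "?Pg = prod.swap ` ?Pl" by auto
  moreover have "(\<Sum>(x,x')\<in>prod.swap ` ?Pl. wt c x x') = (\<Sum>(x,x')\<in>?Pl. wt c x x')"
    by (subst sum.reindex) (auto simp: wt_sym case_prod_unfold)
  ultimately show ?thesis using tot by simp
qed

theorem lemma7:
  fixes n N L :: nat and p \<epsilon>1 \<beta> :: real
  assumes "n \<ge> 1" and "N \<ge> 1"
    and "0 < p" and "p < 1"
    and "0 < \<epsilon>1" and "\<epsilon>1 < 1"
    and "\<beta> > 0" and "L > 0" and "real L = \<beta> * real n"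
    and "\<beta> \<ge> beta0 n N p \<epsilon>1"
  shows "measure_pmf.prob (reads_pmf n L N p) {R. num_faulty n N R > 1} < \<epsilon>1"
proof -
  define c where "c = 1 - (1-p)^2"
  define q where "q = (1 + c) / 2"
  define A where "A = addresses n"
  define Pl where "Pl = {(x,x'). x \<in> A \<and> x' \<in> A \<and> x < x'}"
  define I where "I = Pl \<times> ({..<N} \<times> {..<N})"
  define E :: "(bool list \<times> bool list) \<times> nat \<times> nat \<Rightarrow> (bool list \<Rightarrow> nat \<Rightarrow> read) set"
    where "E = (\<lambda>((x,x'),(t,t')). {R. agree_read (R x t) (R x' t')})"
  define K where "K = 2 ^ n * real N ^ 2 * ((1 + 2 * p - p\<^sup>2) ^ n - 1)"
  let ?M = "reads_pmf n L N p"
  have p01: "0 \<le> p" "p \<le> 1" using assms by auto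
  have finA: "finite A" unfolding A_def addresses_def by (rule finite_lists)
  have fPl: "finite Pl" unfolding Pl_def by (rule finite_subset[of _ "A \<times> A"]) (auto simp: finA)
  have fI: "finite I" unfolding I_def using fPl by simp
  have c_eq: "1 + c = 1 + 2 * p - p\<^sup>2" unfolding c_def by (simp add: power2_eq_square algebra_simps)
  have s1: "(1-p)*(1-p) < 1*1" using assms(3,4) by (intro mult_strict_mono) auto
  have s0: "0 < (1-p)*(1-p)" using assms(4) by simp
  have cpos: "c > 0" unfolding c_def using s1 by (simp add: power2_eq_square)
  have qpos: "q > 0" and qlt: "q < 1" unfolding q_def c_def using s0 s1
    by (auto simp: power2_eq_square)
  have q_eq: "q = 1 - (1 - p)\<^sup>2 / 2" unfolding q_def c_def by simp
  have Kpos: "K > 0"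
  proof -
    have "(1 + c) ^ n > 1" using cpos assms(1) by (intro one_less_power) auto
    then show ?thesis unfolding K_def c_eq[symmetric] using assms(2) by simp
  qed
  have sub: "{R. num_faulty n N R > 1} \<subseteq> (\<Union>i\<in>I. E i)"
  proof
    fix R assume "R \<in> {R. num_faulty n N R > 1}"
    then have "faulty_reads n N R \<noteq> {}" unfolding num_faulty_def by auto
    then obtain x t x' t' where h: "x \<in> A" "t < N" "x' \<in> A" "x' \<noteq> x" "t' < N"
        "agree_read (R x t) (R x' t')"
      unfolding faulty_reads_def A_def by auto
    show "R \<in> (\<Union>i\<in>I. E i)"
    proof (cases "x < x'")
      case True
      then have "((x,x'),(t,t')) \<in> I" using h unfolding I_def Pl_def by auto
      then show ?thesis using h unfolding E_def by force
    next
      case False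
      then have "x' < x" using h(4) by (simp add: neq_iff)
      then have "((x',x),(t',t)) \<in> I" using h unfolding I_def Pl_def by auto
      moreover have "agree_read (R x' t') (R x t)" using h(6) agree_read_sym by metis
      ultimately show ?thesis by (intro UN_I[of "((x',x),(t',t))"]) (auto simp: E_def)
    qed
  qed
  have "measure_pmf.prob ?M {R. num_faulty n N R > 1} \<le> measure_pmf.prob ?M (\<Union>i\<in>I. E i)"
    by (rule measure_pmf.finite_measure_mono[OF sub]) simp
  also have "\<dots> \<le> (\<Sum>i\<in>I. measure_pmf.prob ?M (E i))"
    by (rule measure_pmf.finite_measure_subadditive_finite[OF fI]) auto
  also have "\<dots> = (\<Sum>i\<in>I. wt c (fst (fst i)) (snd (fst i)) * q ^ L)"
  proof (rule sum.cong[OF refl])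
    fix i assume "i \<in> I"
    then obtain x x' t t' where i: "i = ((x,x'),(t,t'))" "x \<in> A" "x' \<in> A" "x < x'" "t < N" "t' < N"
      unfolding I_def Pl_def by auto
    then have "x \<noteq> x'" by simp
    then show "measure_pmf.prob ?M (E i) = wt c (fst (fst i)) (snd (fst i)) * q ^ L"
      using i event_prob[OF p01, of x n x' t N t' L] by (simp add: E_def A_def c_def q_def)
  qed
  also have "\<dots> = (\<Sum>pr\<in>Pl. real N ^ 2 * (wt c (fst pr) (snd pr) * q ^ L))"
  proof -
    have "(\<Sum>pr\<in>Pl. \<Sum>tt\<in>{..<N}\<times>{..<N}. wt c (fst pr) (snd pr) * q ^ L) = (\<Sum>i\<in>I. wt c (fst (fst i)) (snd (fst i)) * q ^ L)"
      unfolding I_def by (subst sum.cartesian_product) (rule sum.cong, auto)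
    then show ?thesis by (simp add: power2_eq_square)
  qed
  also have "\<dots> = real N ^ 2 * q ^ L * (\<Sum>(x,x')\<in>Pl. wt c x x')"
    by (simp add: sum_distrib_left case_prod_unfold algebra_simps)
  also have "\<dots> = K * q ^ L / 2"
    unfolding Pl_def A_def sum_lt_pairs K_def c_eq by simp
  also have "\<dots> \<le> \<epsilon>1 / 2"
  proof -
    have lq: "log 2 q < 0" using qpos qlt by simp
    have den: "real n * log 2 q < 0" using lq assms(1) by (simp add: mult_pos_neg)
    have "beta0 n N p \<epsilon>1 = log 2 (\<epsilon>1 / K) / (real n * log 2 q)"
      unfolding beta0_def K_def q_eq ..
    then have "log 2 (\<epsilon>1 / K) / (real n * log 2 q) \<le> \<beta>" using assms(10) by simp
    then have "\<beta> * (real n * log 2 q) \<le> log 2 (\<epsilon>1 / K)"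
      using den by (simp add: neg_divide_le_eq)
    then have "log 2 (q ^ L) \<le> log 2 (\<epsilon>1 / K)"
      using qpos assms(9) by (simp add: log_nat_power mult.assoc)
    then have "q ^ L \<le> \<epsilon>1 / K"
      using qpos Kpos assms(5) by (simp add: log_le_cancel_iff)
    then have "K * q ^ L \<le> \<epsilon>1" using Kpos by (simp add: field_simps)
    then show ?thesis by simp
  qed
  also have "\<dots> < \<epsilon>1" using assms(5) by simp
  finally show ?thesis .
qed

end
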